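(* Suppose that for some $\delta\ge 0$, \[\log\left(\frac{P_j(x_j\mid x_{-j})\,Q_j(x'_j\mid x_{-j})}{Q_j(x_j\mid x_{-j})\,P_j(x'_j\mid x_{-j})}\right)\le\delta\] holds for all $j=1,\dots,p$, all $x_j,x'_j$ and all $x_{-j}$. Then with probability at least $1-\frac1p$, \[\max_{j=1,\dots,p}\widehat{\mathrm{KL}}_j\le \frac{n\delta^2}{2}+2\sqrt{n\log(p)}\,\delta.\]
   Context: Setting: $X\in\mathbb{R}^p$ has distribution $P_X$; for $x\in\mathbb{R}^p$, $x_{-j}$ is $x$ with coordinate $j$ removed. Each $X_j$ is discrete or continuous, $P_j(\cdot\mid x_{-j})$ is the true conditional pmf/density of $X_j$ given $X_{-j}=x_{-j}$, and $Q_j(\cdot\mid x_{-j})$ is a fixed estimated conditional pmf/density of the same type and same support. A knockoff mechanism $P_{\tilde X\mid X}(\cdot\mid x)$ (a conditional distribution on $\mathbb{R}^p$) is pairwise exchangeable with respect to $Q_j$ if for every distribution $D^{(j)}$ on $\mathbb{R}^p$ with conditional of $X_j$ given $X_{-j}$ equal to $Q_j$, drawing $X\sim D^{(j)}$, $\tilde X\mid X\sim P_{\tilde X\mid X}(\cdot\mid X)$ yields $(X_j,\tilde X_j,X_{-j},\tilde X_{-j})\overset{d}{=}(\tilde X_j,X_j,X_{-j},\tilde X_{-j})$; standing assumption: this holds for every $j=1,\dots,p$. Data: $\mathbf X\in\mathbb{R}^{n\times p}$ with i.i.d. rows $\mathbf X_{i,*}\sim P_X$, and $\tilde{\mathbf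 X}$ with rows drawn independently as $\tilde{\mathbf X}_{i,*}\sim P_{\tilde X\mid X}(\cdot\mid\mathbf X_{i,*})$. Define \[\widehat{\mathrm{KL}}_j=\sum_{i=1}^n\log\left(\frac{P_j(\mathbf X_{ij}\mid \mathbf X_{i,-j})\,Q_j(\tilde{\mathbf X}_{ij}\mid \mathbf X_{i,-j})}{Q_j(\mathbf X_{ij}\mid \mathbf X_{i,-j})\,P_j(\tilde{\mathbf X}_{ij}\mid \mathbf X_{i,-j})}\right).\] *)

theory Defs
  imports "HOL-Probability.Probability"
begin

text \<open>Coordinate update: the vector x with its j-th coordinate replaced by t.
  A function of x that is invariant under such updates at coordinate j is
  exactly a function of x_{-j}.\<close>
definition setc :: "real^'p \<Rightarrow> 'p \<Rightarrow> real \<Rightarrow> real^'p" where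
  "setc x j t = (\<chi> i. if i = j then t else x $ i)"

text \<open>Reference measure of a coordinate: counting measure (discrete, pmf) or
  Lebesgue measure (continuous, density).\<close>
definition ref_measure :: "real measure \<Rightarrow> bool" where
  "ref_measure \<mu> \<longleftrightarrow> \<mu> = count_space UNIV \<or> \<mu> = lborel"

definition is_cond_density :: "'p \<Rightarrow> real measure \<Rightarrow> (real \<Rightarrow> real^'p \<Rightarrow> real) \<Rightarrow> bool" where
  "is_cond_density j \<mu> f \<longleftrightarrow>
     (\<lambda>(t, x). f t x) \<in> borel_measurable (borel \<Otimes>\<^sub>M borel) \<and>
     (\<forall>t x s. f t (setc x j s) = f t x) \<and>
     (\<forall>t x. 0 \<le> f t x) \<and>
     (\<forall>x. (\<integral>\<^sup>+ t. ennreal (f t x) \<partial>\<mu>) = 1)"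

text \<open>The conditional distribution of X_j given X_{-j} under the distribution D
  on R^p has pmf/density f (w.r.t. mu): D is obtained by drawing X from D and
  then redrawing coordinate j from f(. | X_{-j}).\<close>
definition has_cond_density :: "(real^'p) measure \<Rightarrow> 'p \<Rightarrow> real measure \<Rightarrow> (real \<Rightarrow> real^'p \<Rightarrow> real) \<Rightarrow> bool" where
  "has_cond_density D j \<mu> f \<longleftrightarrow>
     is_cond_density j \<mu> f \<and>
     (\<forall>A \<in> sets borel. emeasure D A =
        (\<integral>\<^sup>+ x. (\<integral>\<^sup>+ t. ennreal (f t x) * indicator A (setc x j t) \<partial>\<mu>) \<partial>D))"

definition joint :: "(real^'p) measure \<Rightarrow> (real^'p \<Rightarrow> (real^'p) measure) \<Rightarrow> ((real^'p) \<times> (real^'p)) measure" where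
  "joint D K = bind D (\<lambda>x. bind (K x) (\<lambda>y. return (borel \<Otimes>\<^sub>M borel) (x, y)))"

definition swapj :: "'p \<Rightarrow> (real^'p) \<times> (real^'p) \<Rightarrow> (real^'p) \<times> (real^'p)" where
  "swapj j xy = (setc (fst xy) j (snd xy $ j), setc (snd xy) j (fst xy $ j))"

definition pairwise_exch :: "(real^'p \<Rightarrow> (real^'p) measure) \<Rightarrow> 'p \<Rightarrow> real measure \<Rightarrow> (real \<Rightarrow> real^'p \<Rightarrow> real) \<Rightarrow> bool" where
  "pairwise_exch K j \<mu> Qj \<longleftrightarrow>
     (\<forall>D. prob_space D \<and> sets D = sets borel \<and> has_cond_density D j \<mu> Qj \<longrightarrow>
        distr (joint D K) (borel \<Otimes>\<^sub>M borel) (swapj j) = joint D K)"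

text \<open>The statistic KLhat_j of the data; omega i = (row i of X, row i of Xtilde).\<close>
definition KLhat :: "nat \<Rightarrow> 'p \<Rightarrow> (real \<Rightarrow> real^'p \<Rightarrow> real) \<Rightarrow> (real \<Rightarrow> real^'p \<Rightarrow> real) \<Rightarrow>
     (nat \<Rightarrow> (real^'p) \<times> (real^'p)) \<Rightarrow> real" where
  "KLhat n j Pj Qj \<omega> = (\<Sum>i<n. ln ((Pj (fst (\<omega> i) $ j) (fst (\<omega> i)) * Qj (snd (\<omega> i) $ j) (fst (\<omega> i))) /
                                 (Qj (fst (\<omega> i) $ j) (fst (\<omega> i)) * Pj (snd (\<omega> i) $ j) (fst (\<omega> i)))))"

end

theory Submission
  imports Defs
begin


lemma setc_cont: "continuous_on UNIV (\<lambda>z::((real^'p) \<times> real). setc (fst z) j (snd z))"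
  unfolding setc_def
  by (rule continuous_on_vec_lambda, rename_tac i, case_tac "i = j") (auto intro!: continuous_intros)

lemma setc_meas2[measurable]:
  "(\<lambda>z::((real^'p) \<times> real). setc (fst z) j (snd z)) \<in> borel_measurable borel"
  by (rule borel_measurable_continuous_onI[OF setc_cont])

lemma setc_meas_pair:
  assumes f: "f \<in> measurable M borel" and g: "g \<in> measurable M borel"
  shows "(\<lambda>w. setc (f w) j (g w :: real)) \<in> measurable M (borel :: (real^'p) measure)"
proof -
  have "(\<lambda>w. (f w, g w)) \<in> measurable M borel"
    using f g by (intro borel_measurable_Pair)
  from measurable_compose[OF this setc_meas2[of j]] show ?thesis by simp
qed

lemma setc_setc[simp]: "setc (setc x j s) j t = setc x j t"
  by (simp add: setc_def vec_eq_iff)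
lemma setc_nth_same[simp]: "setc x j t $ j = t"
  by (simp add: setc_def)
lemma setc_self[simp]: "setc x j (x $ j) = x"
  by (simp add: setc_def vec_eq_iff)

lemma ref_meas: "ref_measure \<mu> \<Longrightarrow> f \<in> borel_measurable borel \<Longrightarrow> f \<in> borel_measurable \<mu>"
  unfolding ref_measure_def by (auto simp: measurable_cong_sets[OF _ refl, of lborel borel])

lemma cd_meas1:
  assumes "is_cond_density j \<mu> f"
  shows "(\<lambda>t. f t x) \<in> borel_measurable borel"
proof -
  have m: "(\<lambda>(t, x). f t x) \<in> borel_measurable (borel \<Otimes>\<^sub>M borel)" using assms unfolding is_cond_density_def by blast
  have "(\<lambda>t. (t, x)) \<in> measurable borel (borel \<Otimes>\<^sub>M borel)" by measurable
  from measurable_compose[OF this m] show ?thesis by simp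
qed

lemma cd_meas2:
  fixes f :: "real \<Rightarrow> real^'p \<Rightarrow> real"
  assumes "is_cond_density j \<mu> f"
  shows "(\<lambda>x. f (x $ j) x) \<in> borel_measurable borel"
proof -
  have m: "(\<lambda>(t, x). f t x) \<in> borel_measurable (borel \<Otimes>\<^sub>M borel)" using assms unfolding is_cond_density_def by blast
  have "(\<lambda>x::real^'p. (x $ j, x)) \<in> measurable borel (borel \<Otimes>\<^sub>M borel)" by measurable
  from measurable_compose[OF this m] show ?thesis by simp
qed

lemma cd_inv: "is_cond_density j \<mu> f \<Longrightarrow> f t (setc x j s) = f t x"
  unfolding is_cond_density_def by blast
lemma cd_nn: "is_cond_density j \<mu> f \<Longrightarrow> 0 \<le> f t x"
  unfolding is_cond_density_def by blast
lemma cd_one: "is_cond_density j \<mu> f \<Longrightarrow> (\<integral>\<^sup>+ t. ennreal (f t x) \<partial>\<mu>) = 1"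
  unfolding is_cond_density_def by blast

lemma nn_integral_minorant:
  fixes u :: "'a \<Rightarrow> ennreal"
  shows "\<exists>g\<in>borel_measurable M. (\<forall>x. g x \<le> u x) \<and> integral\<^sup>N M g = integral\<^sup>N M u"
proof -
  let ?S = "{g. simple_function M g \<and> g \<le> u}"
  have ne: "integral\<^sup>S M ` ?S \<noteq> {}"
    by (auto intro!: exI[of _ "\<lambda>_. 0"] simp: le_fun_def)
  obtain f where f: "incseq f" "range f \<subseteq> integral\<^sup>S M ` ?S" "Sup (integral\<^sup>S M ` ?S) = (SUP i. f i)"
    using ennreal_Sup_countable_SUP[OF ne] by blast
  have "\<forall>i. \<exists>G. simple_function M G \<and> G \<le> u \<and> f i = integral\<^sup>S M G"
    using f(2) by blast
  then obtain G where G: "\<And>i. simple_function M (G i)" "\<And>i. G i \<le> u" "\<And>i. f i = integral\<^sup>S M (G i)"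
    by metis
  define g where "g x = (SUP i. G i x)" for x
  have gm: "g \<in> borel_measurable M"
    unfolding g_def using G(1) by (intro borel_measurable_SUP borel_measurable_simple_function) auto
  have gu: "\<forall>x. g x \<le> u x"
    unfolding g_def using G(2) by (auto intro!: SUP_least simp: le_fun_def)
  have "integral\<^sup>N M u = (SUP i. f i)" unfolding nn_integral_def using f(3) by simp
  also have "\<dots> \<le> integral\<^sup>N M g"
  proof (rule SUP_least)
    fix i
    have "f i = integral\<^sup>N M (G i)" using G by (simp add: nn_integral_eq_simple_integral)
    also have "\<dots> \<le> integral\<^sup>N M g" by (intro nn_integral_mono) (auto simp: g_def intro: SUP_upper)
    finally show "f i \<le> integral\<^sup>N M g" .
  qed
  finally have "integral\<^sup>N M u \<le> integral\<^sup>N M g" .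
  moreover have "integral\<^sup>N M g \<le> integral\<^sup>N M u" using gu by (intro nn_integral_mono) auto
  ultimately show ?thesis using gm gu by (intro bexI[of _ g]) auto
qed

lemma ennreal_sandwich:
  fixes a b c d :: ennreal
  assumes "a \<le> b" "c \<le> d" "a + c = b + d" "b + d \<noteq> top"
  shows "a = b"
proof -
  have "d + b \<le> d + a" using assms by (metis add.commute add_left_mono)
  moreover have "d \<noteq> top" using assms(4) by auto
  ultimately have "b \<le> a" by (simp add: ennreal_add_left_cancel_le)
  then show ?thesis using assms(1) by simp
qed

lemma AE_eq_one:
  assumes "prob_space M" "h \<in> borel_measurable M" "\<And>x. h x \<le> 1" "integral\<^sup>N M h = 1"
  shows "AE x in M. h x = 1"
proof -
  interpret prob_space M by fact
  have "(\<integral>\<^sup>+x. 1 - h x \<partial>M) = (\<integral>\<^sup>+x. 1 \<partial>M) - integral\<^sup>N M h"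
    using assms by (intro nn_integral_diff) auto
  also have "\<dots> = 0" using assms(4) by (simp add: emeasure_space_1)
  finally have "AE x in M. 1 - h x = 0"
    using assms by (subst nn_integral_0_iff_AE[symmetric]) auto
  then show ?thesis
    by eventually_elim (metis assms(3) antisym diff_eq_0_iff_ennreal ennreal_one_less_top linorder_not_less top.not_eq_extremum)
qed

definition cpsi :: "'p \<Rightarrow> real measure \<Rightarrow> (real \<Rightarrow> real^'p \<Rightarrow> real) \<Rightarrow> (real^'p \<Rightarrow> ennreal) \<Rightarrow> real^'p \<Rightarrow> ennreal" where
  "cpsi j \<mu> p f x = (\<integral>\<^sup>+t. ennreal (p t x) * f (setc x j t) \<partial>\<mu>)"

lemma setc_meas1: "(\<lambda>t. setc x j t) \<in> borel_measurable borel"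
  using setc_meas_pair[of "\<lambda>_. x" borel "\<lambda>t. t"] by simp

lemma cpsi_meas_t:
  fixes f :: "real^'p \<Rightarrow> ennreal"
  assumes "ref_measure \<mu>" "is_cond_density j \<mu> p" "f \<in> borel_measurable borel"
  shows "(\<lambda>t. ennreal (p t x) * f (setc x j t)) \<in> borel_measurable \<mu>"
proof (rule ref_meas[OF assms(1)])
  have "(\<lambda>t. f (setc x j t)) \<in> borel_measurable borel"
    using measurable_compose[OF setc_meas1 assms(3)] by simp
  then show "(\<lambda>t. ennreal (p t x) * f (setc x j t)) \<in> borel_measurable borel"
    using cd_meas1[OF assms(2)] by measurable
qed

lemma disint:
  fixes M :: "(real^'p) measure" and f :: "real^'p \<Rightarrow> ennreal"
  assumes M: "prob_space M" "sets M = sets borel" and hc: "has_cond_density M j \<mu> p"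
    and ref: "ref_measure \<mu>" and f: "f \<in> borel_measurable borel"
  shows "\<exists>g\<in>borel_measurable borel. (AE x in M. cpsi j \<mu> p f x = g x) \<and> integral\<^sup>N M g = integral\<^sup>N M f"
  using f
proof (induct rule: borel_measurable_induct)
  case (cong f g)
  then have "f = g" by (auto simp: fun_eq_iff)
  then show ?case using cong by simp
next
  case (set A)
  interpret prob_space M by fact
  have cd: "is_cond_density j \<mu> p" using hc unfolding has_cond_density_def by blast
  have spM: "space M = UNIV" using sets_eq_imp_space_eq[OF M(2)] by simp
  have mcong: "g \<in> borel_measurable M \<longleftrightarrow> g \<in> borel_measurable borel" for g :: "real^'p \<Rightarrow> ennreal"
    using measurable_cong_sets[of M borel "borel::ennreal measure" borel] M(2) by simp
  have Ac: "-A \<in> sets borel" using set by auto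
  have eqA: "emeasure M B = (\<integral>\<^sup>+x. cpsi j \<mu> p (indicator B) x \<partial>M)" if "B \<in> sets borel" for B
    using hc that unfolding has_cond_density_def cpsi_def by blast
  have sum1: "cpsi j \<mu> p (indicator A) x + cpsi j \<mu> p (indicator (-A)) x = 1" for x
  proof -
    have "cpsi j \<mu> p (indicator A) x + cpsi j \<mu> p (indicator (-A)) x
        = (\<integral>\<^sup>+t. ennreal (p t x) * indicator A (setc x j t) + ennreal (p t x) * indicator (-A) (setc x j t) \<partial>\<mu>)"
      unfolding cpsi_def using set Ac
      by (intro nn_integral_add[symmetric] cpsi_meas_t[OF ref cd]) auto
    also have "\<dots> = (\<integral>\<^sup>+t. ennreal (p t x) \<partial>\<mu>)"
      by (intro nn_integral_cong) (auto split: split_indicator)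
    also have "\<dots> = 1" using cd_one[OF cd] .
    finally show ?thesis .
  qed
  obtain g1 where g1: "g1 \<in> borel_measurable M" "\<forall>x. g1 x \<le> cpsi j \<mu> p (indicator A) x"
      "integral\<^sup>N M g1 = integral\<^sup>N M (cpsi j \<mu> p (indicator A))"
    using nn_integral_minorant by blast
  obtain g2 where g2: "g2 \<in> borel_measurable M" "\<forall>x. g2 x \<le> cpsi j \<mu> p (indicator (-A)) x"
      "integral\<^sup>N M g2 = integral\<^sup>N M (cpsi j \<mu> p (indicator (-A)))"
    using nn_integral_minorant by blast
  have i1: "integral\<^sup>N M g1 = emeasure M A" using g1 eqA[OF set] by simp
  have i2: "integral\<^sup>N M g2 = emeasure M (-A)" using g2 eqA[OF Ac] by simp
  have AM: "A \<in> sets M" using set M(2) by simp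
  have "emeasure M A + emeasure M (space M - A) = emeasure M (space M)"
    using AM plus_emeasure[of A M "space M - A"] sets.sets_into_space[OF AM] by (simp add: Un_absorb1)
  then have tot: "emeasure M A + emeasure M (-A) = 1" using spM emeasure_space_1 by (simp add: Compl_eq_Diff_UNIV)
  have le1: "g1 x + g2 x \<le> 1" for x
    using add_mono[OF spec[OF g1(2), of x] spec[OF g2(2), of x]] sum1[of x] by simp
  have int1: "integral\<^sup>N M (\<lambda>x. g1 x + g2 x) = 1"
    using g1(1) g2(1) i1 i2 tot by (simp add: nn_integral_add)
  have "AE x in M. g1 x + g2 x = 1"
    using AE_eq_one[OF M(1) _ le1 int1] g1(1) g2(1) by auto
  then have ae: "AE x in M. cpsi j \<mu> p (indicator A) x = g1 x"
  proof eventually_elim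
    case (elim x)
    show ?case
      using ennreal_sandwich[OF spec[OF g1(2), of x] spec[OF g2(2), of x]] elim sum1[of x] by simp
  qed
  show ?case
    using ae g1(1) i1 AM by (intro bexI[of _ g1]) (auto simp: mcong)
next
  case (mult u c)
  interpret prob_space M by fact
  have cd: "is_cond_density j \<mu> p" using hc unfolding has_cond_density_def by blast
  have mcong: "g \<in> borel_measurable M \<longleftrightarrow> g \<in> borel_measurable borel" for g :: "real^'p \<Rightarrow> ennreal"
    using measurable_cong_sets[of M borel "borel::ennreal measure" borel] M(2) by simp
  obtain g where g: "g \<in> borel_measurable borel" "AE x in M. cpsi j \<mu> p u x = g x" "integral\<^sup>N M g = integral\<^sup>N M u"
    using mult by blast
  have cm: "cpsi j \<mu> p (\<lambda>x. c * u x) x = c * cpsi j \<mu> p u x" for x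
    unfolding cpsi_def
    by (subst nn_integral_cmult[symmetric]) (auto intro!: nn_integral_cong cpsi_meas_t[OF ref cd] mult simp: mult_ac)
  show ?case
  proof (intro bexI[of _ "\<lambda>x. c * g x"] conjI)
    show "AE x in M. cpsi j \<mu> p (\<lambda>x. c * u x) x = c * g x" using g(2) by eventually_elim (simp add: cm)
    show "(\<integral>\<^sup>+ x. c * g x \<partial>M) = (\<integral>\<^sup>+ x. c * u x \<partial>M)"
      using g mult by (simp add: nn_integral_cmult mcong)
  qed (use g in auto)
next
  case (add u v)
  interpret prob_space M by fact
  have cd: "is_cond_density j \<mu> p" using hc unfolding has_cond_density_def by blast
  have mcong: "g \<in> borel_measurable M \<longleftrightarrow> g \<in> borel_measurable borel" for g :: "real^'p \<Rightarrow> ennreal"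
    using measurable_cong_sets[of M borel "borel::ennreal measure" borel] M(2) by simp
  obtain g where g: "g \<in> borel_measurable borel" "AE x in M. cpsi j \<mu> p u x = g x" "integral\<^sup>N M g = integral\<^sup>N M u"
    using add by blast
  obtain h where h: "h \<in> borel_measurable borel" "AE x in M. cpsi j \<mu> p v x = h x" "integral\<^sup>N M h = integral\<^sup>N M v"
    using add by blast
  have ca: "cpsi j \<mu> p (\<lambda>x. v x + u x) x = cpsi j \<mu> p v x + cpsi j \<mu> p u x" for x
    unfolding cpsi_def
    by (subst nn_integral_add[symmetric]) (auto intro!: nn_integral_cong cpsi_meas_t[OF ref cd] add simp: distrib_left)
  show ?case
  proof (intro bexI[of _ "\<lambda>x. h x + g x"] conjI)
    show "AE x in M. cpsi j \<mu> p (\<lambda>x. v x + u x) x = h x + g x" using g(2) h(2) by eventually_elim (simp add: ca)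
    show "(\<integral>\<^sup>+ x. h x + g x \<partial>M) = (\<integral>\<^sup>+ x. v x + u x \<partial>M)"
      using g h add by (simp add: nn_integral_add mcong)
  qed (use g h in auto)
next
  case (seq U)
  interpret prob_space M by fact
  have cd: "is_cond_density j \<mu> p" using hc unfolding has_cond_density_def by blast
  have mcong: "g \<in> borel_measurable M \<longleftrightarrow> g \<in> borel_measurable borel" for g :: "real^'p \<Rightarrow> ennreal"
    using measurable_cong_sets[of M borel "borel::ennreal measure" borel] M(2) by simp
  have "\<forall>i. \<exists>g. g \<in> borel_measurable borel \<and> (AE x in M. cpsi j \<mu> p (U i) x = g x) \<and> integral\<^sup>N M g = integral\<^sup>N M (U i)"
    using seq by blast
  then obtain g where g: "\<And>i. g i \<in> borel_measurable borel" "\<And>i. AE x in M. cpsi j \<mu> p (U i) x = g i x"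
     "\<And>i. integral\<^sup>N M (g i) = integral\<^sup>N M (U i)"
    by metis
  have cmono: "cpsi j \<mu> p (U i) x \<le> cpsi j \<mu> p (U (Suc i)) x" for i x
    unfolding cpsi_def using seq(4) by (intro nn_integral_mono mult_left_mono) (auto simp: incseq_def le_fun_def)
  have csup: "cpsi j \<mu> p (SUP i. U i) x = (SUP i. cpsi j \<mu> p (U i) x)" for x
  proof -
    have "cpsi j \<mu> p (SUP i. U i) x = (\<integral>\<^sup>+t. (SUP i. ennreal (p t x) * U i (setc x j t)) \<partial>\<mu>)"
      unfolding cpsi_def by (simp add: SUP_mult_left_ennreal image_comp)
    also have "\<dots> = (SUP i. cpsi j \<mu> p (U i) x)"
      unfolding cpsi_def using seq(4)
      by (intro nn_integral_monotone_convergence_SUP cpsi_meas_t[OF ref cd] seq)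
         (auto simp: incseq_def le_fun_def intro!: mult_left_mono)
    finally show ?thesis .
  qed
  have aeall: "AE x in M. \<forall>i. cpsi j \<mu> p (U i) x = g i x"
    using g(2) by (simp add: AE_all_countable)
  show ?case
  proof (intro bexI[of _ "\<lambda>x. SUP i. g i x"] conjI)
    show "AE x in M. cpsi j \<mu> p (SUP i. U i) x = (SUP i. g i x)"
      using aeall by eventually_elim (simp add: csup)
    have "(\<integral>\<^sup>+ x. (SUP i. g i x) \<partial>M) = (SUP i. integral\<^sup>N M (g i))"
    proof (rule nn_integral_monotone_convergence_SUP_AE)
      show "AE x in M. g i x \<le> g (Suc i) x" for i
        using aeall by eventually_elim (metis cmono)
    qed (use g in \<open>auto simp: mcong\<close>)
    also have "\<dots> = (SUP i. integral\<^sup>N M (U i))" using g(3) by simp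
    also have "\<dots> = (\<integral>\<^sup>+ x. (SUP i. U i x) \<partial>M)"
      using seq by (intro nn_integral_monotone_convergence_SUP[symmetric]) (auto simp: mcong)
    also have "(\<lambda>x. SUP i. U i x) = (SUP i. U i)" by (simp add: fun_eq_iff image_comp)
    finally show "(\<integral>\<^sup>+ x. (SUP i. g i x) \<partial>M) = integral\<^sup>N M (SUP i. U i)" .
  qed (use g in auto)
qed



locale kn =
  fixes PX :: "(real^'p) measure" and j :: 'p and \<mu> :: "real measure"
    and p q :: "real \<Rightarrow> real^'p \<Rightarrow> real" and K :: "real^'p \<Rightarrow> (real^'p) measure" and \<delta> :: real
  assumes PX: "prob_space PX" "sets PX = sets borel"
  and ref: "ref_measure \<mu>"
  and hcP: "has_cond_density PX j \<mu> p"
  and cdQ: "is_cond_density j \<mu> q"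
  and supp: "\<And>t x. 0 < p t x \<longleftrightarrow> 0 < q t x"
  and Kk: "K \<in> borel \<rightarrow>\<^sub>M prob_algebra borel"
  and exch: "pairwise_exch K j \<mu> q"
  and bound: "\<And>t t' x. ln ((p t x * q t' x) / (q t x * p t' x)) \<le> \<delta>"
  and \<delta>: "0 \<le> \<delta>"
begin

lemma cdP: "is_cond_density j \<mu> p" using hcP unfolding has_cond_density_def by blast

lemma spPX: "space PX = UNIV" using sets_eq_imp_space_eq[OF PX(2)] by simp

lemma mPX: "f \<in> borel_measurable PX \<longleftrightarrow> f \<in> borel_measurable borel" for f :: "real^'p \<Rightarrow> ennreal"
  using measurable_cong_sets[of PX borel "borel::ennreal measure" borel] PX(2) by simp

lemma mPXr: "f \<in> borel_measurable PX \<longleftrightarrow> f \<in> borel_measurable borel" for f :: "real^'p \<Rightarrow> real"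
  using measurable_cong_sets[of PX borel "borel::real measure" borel] PX(2) by simp

lemma p_nn: "0 \<le> p t x" using cd_nn[OF cdP] .
lemma q_nn: "0 \<le> q t x" using cd_nn[OF cdQ] .
lemma p_inv: "p t (setc x j s) = p t x" using cd_inv[OF cdP] .
lemma q_inv: "q t (setc x j s) = q t x" using cd_inv[OF cdQ] .
lemma p0q0: "p t x = 0 \<longleftrightarrow> q t x = 0" using supp[of t x] p_nn[of t x] q_nn[of t x] by auto

definition w :: "real^'p \<Rightarrow> real" where "w x = q (x $ j) x / p (x $ j) x"

lemma w_meas[measurable]: "w \<in> borel_measurable borel"
  unfolding w_def using cd_meas2[OF cdP] cd_meas2[OF cdQ] by measurable

lemma w_nn: "0 \<le> w x" unfolding w_def using p_nn q_nn by simp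

lemma cpsi_w: "cpsi j \<mu> p (\<lambda>x. ennreal (w x) * f x) x = cpsi j \<mu> q f x"
  unfolding cpsi_def
proof (intro nn_integral_cong)
  fix t
  show "ennreal (p t x) * (ennreal (w (setc x j t)) * f (setc x j t)) = ennreal (q t x) * f (setc x j t)"
    unfolding w_def using p0q0[of t x] p_nn[of t x] q_nn[of t x]
    by (cases "p t x = 0") (simp_all add: p_inv q_inv ennreal_mult'[symmetric] mult.assoc[symmetric])
qed

lemma cpsi_w1: "cpsi j \<mu> p (\<lambda>x. ennreal (w x)) x = 1"
  using cpsi_w[of "\<lambda>_. 1" x] cd_one[OF cdQ] unfolding cpsi_def by simp

lemma int_w: "(\<integral>\<^sup>+x. ennreal (w x) \<partial>PX) = 1"
proof -
  obtain g where g: "g \<in> borel_measurable borel" "AE x in PX. cpsi j \<mu> p (\<lambda>x. ennreal (w x)) x = g x"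
    "integral\<^sup>N PX g = (\<integral>\<^sup>+x. ennreal (w x) \<partial>PX)"
    using disint[OF PX hcP ref, of "\<lambda>x. ennreal (w x)"] by auto
  have "AE x in PX. g x = 1" using g(2) by eventually_elim (simp add: cpsi_w1)
  then have "integral\<^sup>N PX g = (\<integral>\<^sup>+x. 1 \<partial>PX)" by (rule nn_integral_cong_AE)
  then show ?thesis using g(3) prob_space.emeasure_space_1[OF PX(1)] by simp
qed

definition D where "D = density PX (\<lambda>x. ennreal (w x))"

lemma sets_D: "sets D = sets borel" unfolding D_def using PX(2) by simp

lemma prob_D: "prob_space D"
proof
  show "emeasure D (space D) = 1"
    unfolding D_def using int_w spPX PX(2)
    by (subst emeasure_density) (auto simp: mPX)
qed

lemma G_inv: "cpsi j \<mu> q f (setc x j s) = cpsi j \<mu> q f x"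
  unfolding cpsi_def by (simp add: q_inv)

lemma cpsi_null:
  assumes N: "N \<in> sets borel" "emeasure PX N = 0"
  shows "AE x in PX. AE t in \<mu>. p t x = 0 \<or> setc x j t \<notin> N"
proof -
  obtain g where g: "g \<in> borel_measurable borel" "AE x in PX. cpsi j \<mu> p (indicator N) x = g x"
    "integral\<^sup>N PX g = (\<integral>\<^sup>+x. indicator N x \<partial>PX)"
    using disint[OF PX hcP ref, of "indicator N"] N by auto
  have "integral\<^sup>N PX g = 0" using g(3) N PX(2) by simp
  then have "AE x in PX. g x = 0" using g(1) by (subst (asm) nn_integral_0_iff_AE) (auto simp: mPX)
  with g(2) show ?thesis
  proof eventually_elim
    case (elim x)
    then have "(\<integral>\<^sup>+t. ennreal (p t x) * indicator N (setc x j t) \<partial>\<mu>) = 0" unfolding cpsi_def by simp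
    then have "AE t in \<mu>. ennreal (p t x) * indicator N (setc x j t) = 0"
      using N by (subst (asm) nn_integral_0_iff_AE) (auto intro!: cpsi_meas_t[OF ref cdP])
    then show ?case
    proof eventually_elim
      case (elim t)
      show ?case
      proof (cases "setc x j t \<in> N")
        case True
        then have "ennreal (p t x) = 0" using elim by simp
        then show ?thesis using p_nn[of t x] by (simp add: ennreal_eq_0_iff)
      qed simp
    qed
  qed
qed

lemma hc_D: "has_cond_density D j \<mu> q"
  unfolding has_cond_density_def
proof (intro conjI cdQ ballI)
  fix A :: "(real^'p) set" assume A: "A \<in> sets borel"
  let ?G = "cpsi j \<mu> q (indicator A)"
  obtain g1 where g1: "g1 \<in> borel_measurable borel"
    "AE x in PX. cpsi j \<mu> p (\<lambda>x. ennreal (w x) * indicator A x) x = g1 x"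
    "integral\<^sup>N PX g1 = (\<integral>\<^sup>+x. ennreal (w x) * indicator A x \<partial>PX)"
    using disint[OF PX hcP ref, of "\<lambda>x. ennreal (w x) * indicator A x"] A by auto
  have ae1: "AE x in PX. ?G x = g1 x" using g1(2) by (simp add: cpsi_w)
  have DA: "emeasure D A = integral\<^sup>N PX g1"
    unfolding D_def using g1(3) A PX(2) by (subst emeasure_density) (auto simp: mPX)
  obtain N where N: "{x \<in> space PX. \<not> ?G x = g1 x} \<subseteq> N" "emeasure PX N = 0" "N \<in> sets PX"
    using ae1 by (auto elim!: AE_E)
  have Nb: "N \<in> sets borel" using N(3) PX(2) by simp
  obtain g2 where g2: "g2 \<in> borel_measurable borel"
    "AE x in PX. cpsi j \<mu> p (\<lambda>x. ennreal (w x) * g1 x) x = g2 x"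
    "integral\<^sup>N PX g2 = (\<integral>\<^sup>+x. ennreal (w x) * g1 x \<partial>PX)"
    using disint[OF PX hcP ref, of "\<lambda>x. ennreal (w x) * g1 x"] g1(1) by auto
  have ae2: "AE x in PX. cpsi j \<mu> p (\<lambda>x. ennreal (w x) * g1 x) x = ?G x"
    using cpsi_null[OF Nb N(2)]
  proof eventually_elim
    case (elim x)
    have "cpsi j \<mu> p (\<lambda>x. ennreal (w x) * g1 x) x = cpsi j \<mu> p (\<lambda>y. ennreal (w y) * ?G x) x"
      unfolding cpsi_def[of j \<mu> p]
    proof (intro nn_integral_cong_AE)
      have pt: "ennreal (p t x) * (ennreal (w (setc x j t)) * g1 (setc x j t)) =
           ennreal (p t x) * (ennreal (w (setc x j t)) * ?G x)" if "p t x = 0 \<or> setc x j t \<notin> N" for t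
        using that
      proof (elim disjE)
        assume "p t x = 0" then show ?thesis by simp
      next
        assume "setc x j t \<notin> N"
        moreover have "setc x j t \<in> space PX" using spPX by simp
        ultimately have "g1 (setc x j t) = ?G (setc x j t)" using N(1) by (metis (mono_tags, lifting) mem_Collect_eq subsetD)
        then show ?thesis by (simp add: G_inv)
      qed
      show "AE t in \<mu>. ennreal (p t x) * (ennreal (w (setc x j t)) * g1 (setc x j t)) =
           ennreal (p t x) * (ennreal (w (setc x j t)) * ?G x)"
        by (rule eventually_mono[OF elim pt])
    qed
    also have "\<dots> = cpsi j \<mu> p (\<lambda>y. ennreal (w y)) x * ?G x"
      unfolding cpsi_def[of j \<mu> p]
      by (subst nn_integral_multc[symmetric]) (auto intro!: cpsi_meas_t[OF ref cdP] simp: mult.assoc)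
    finally show ?case by (simp add: cpsi_w1)
  qed
  have "(\<integral>\<^sup>+x. ennreal (w x) * g1 x \<partial>PX) = integral\<^sup>N PX g1"
  proof -
    have "AE x in PX. g2 x = g1 x" using g2(2) ae2 ae1 by eventually_elim simp
    then have "integral\<^sup>N PX g2 = integral\<^sup>N PX g1" by (rule nn_integral_cong_AE)
    then show ?thesis using g2(3) by simp
  qed
  moreover have "(\<integral>\<^sup>+x. ?G x \<partial>D) = (\<integral>\<^sup>+x. ennreal (w x) * g1 x \<partial>PX)"
  proof -
    have "AE x in D. ?G x = g1 x"
      unfolding D_def using ae1 by (subst AE_density) (auto simp: mPX)
    then have "(\<integral>\<^sup>+x. ?G x \<partial>D) = integral\<^sup>N D g1" by (rule nn_integral_cong_AE)
    also have "\<dots> = (\<integral>\<^sup>+x. ennreal (w x) * g1 x \<partial>PX)"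
      unfolding D_def using g1(1) by (subst nn_integral_density) (auto simp: mPX)
    finally show ?thesis .
  qed
  ultimately show "emeasure D A = (\<integral>\<^sup>+x. (\<integral>\<^sup>+ t. ennreal (q t x) * indicator A (setc x j t) \<partial>\<mu>) \<partial>D)"
    using DA unfolding cpsi_def by simp
qed

end


lemma key_exp: fixes v :: real assumes "0 \<le> v" shows "exp v - 1 \<le> (exp v + 1) * v / 2"
proof -
  define F where "F x = (exp x + 1) * x / 2 - exp x + 1" for x :: real
  have "F 0 \<le> F v"
  proof (rule DERIV_nonneg_imp_increasing_open[OF assms])
    fix x :: real assume "0 < x" "x < v"
    have d: "DERIV F x :> ((exp x * x + (exp x + 1)) / 2 - exp x)"
      unfolding F_def by (auto intro!: derivative_eq_intros)
    have "1 - x \<le> exp (-x)" using exp_ge_add_one_self[of "-x"] by simp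
    then have "(1 - x) * exp x \<le> exp (-x) * exp x" by (intro mult_right_mono) auto
    then have "(1 - x) * exp x \<le> 1" by (simp add: exp_minus field_simps)
    then have "0 \<le> (exp x * x + (exp x + 1)) / 2 - exp x" by (simp add: algebra_simps)
    with d show "\<exists>y. DERIV F x :> y \<and> 0 \<le> y" by blast
  next
    show "continuous_on {0..v} F" unfolding F_def by (intro continuous_intros) auto
  qed
  then show ?thesis unfolding F_def by simp
qed

lemma key_exp2: fixes u :: real shows "(exp u - 1) * u \<le> (exp u + 1) * u\<^sup>2 / 2"
proof (cases "0 \<le> u")
  case True
  then have "(exp u - 1) * u \<le> ((exp u + 1) * u / 2) * u" by (intro mult_right_mono key_exp)
  then show ?thesis by (simp add: power2_eq_square)
next
  case False
  define v where "v = -u"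
  have v: "0 \<le> v" using False v_def by simp
  have "exp v - 1 \<le> (exp v + 1) * v / 2" by (rule key_exp[OF v])
  then have "(exp v - 1) * exp (-v) \<le> ((exp v + 1) * v / 2) * exp (-v)" by (intro mult_right_mono) auto
  then have "1 - exp (-v) \<le> (1 + exp (-v)) * v / 2" by (simp add: exp_minus field_simps)
  then have "(1 - exp (-v)) * v \<le> ((1 + exp (-v)) * v / 2) * v" by (intro mult_right_mono v)
  then show ?thesis unfolding v_def by (simp add: power2_eq_square algebra_simps)
qed

lemma key_ineq:
  fixes a b \<delta> :: real
  assumes "0 < a" "0 < b" "\<bar>ln (a / b)\<bar> \<le> \<delta>"
  shows "(a - b) * ln (a / b) \<le> (a + b) * \<delta>\<^sup>2 / 2"
proof -
  define u where "u = ln (a / b)"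
  have a: "a = b * exp u" unfolding u_def using assms by simp
  have "(a - b) * u = b * ((exp u - 1) * u)" unfolding a by (simp add: algebra_simps)
  also have "\<dots> \<le> b * ((exp u + 1) * u\<^sup>2 / 2)" using assms(2) by (intro mult_left_mono key_exp2) auto
  also have "\<dots> \<le> b * ((exp u + 1) * \<delta>\<^sup>2 / 2)"
  proof -
    have "\<bar>u\<bar>\<^sup>2 \<le> \<delta>\<^sup>2" using power_mono[OF assms(3) abs_ge_zero, of 2] unfolding u_def .
    then have "u\<^sup>2 \<le> \<delta>\<^sup>2" by simp
    moreover have "0 \<le> exp u + 1" by (simp add: add_nonneg_nonneg)
    ultimately have "(exp u + 1) * u\<^sup>2 / 2 \<le> (exp u + 1) * \<delta>\<^sup>2 / 2"
      by (intro divide_right_mono mult_left_mono) auto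
    then show ?thesis using assms(2) by (intro mult_left_mono) auto
  qed
  also have "\<dots> = (a + b) * \<delta>\<^sup>2 / 2" unfolding a by (simp add: algebra_simps)
  finally show ?thesis unfolding u_def .
qed

definition jk where "jk K = (\<lambda>x. bind (K x) (\<lambda>y. return (borel \<Otimes>\<^sub>M borel) (x, y)))"

lemma joint_kernel:
  fixes K :: "real^'p \<Rightarrow> (real^'p) measure"
  assumes K: "K \<in> borel \<rightarrow>\<^sub>M prob_algebra borel"
  shows "jk K \<in> (borel :: (real^'p) measure) \<rightarrow>\<^sub>M prob_algebra (borel \<Otimes>\<^sub>M borel)"
  unfolding jk_def
proof (rule measurable_bind_prob_space2[OF K])
  have "(\<lambda>z. z) \<in> (borel::(real^'p) measure) \<Otimes>\<^sub>M (borel::(real^'p) measure) \<rightarrow>\<^sub>M borel \<Otimes>\<^sub>M borel" by simp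
  from measurable_compose[OF this measurable_return_prob_space]
  show "(\<lambda>(x, y). return (borel \<Otimes>\<^sub>M borel) (x, y)) \<in> (borel::(real^'p) measure) \<Otimes>\<^sub>M borel \<rightarrow>\<^sub>M prob_algebra (borel \<Otimes>\<^sub>M borel)"
    by (simp add: case_prod_beta')
qed

lemma joint_eq: "joint D K = bind D (jk K)" unfolding joint_def jk_def ..

lemma D_in_pa: "prob_space D \<Longrightarrow> sets D = sets borel \<Longrightarrow> D \<in> space (prob_algebra borel)"
  by (simp add: space_prob_algebra)

lemma joint_kernel_D:
  fixes K :: "real^'p \<Rightarrow> (real^'p) measure"
  assumes K: "K \<in> borel \<rightarrow>\<^sub>M prob_algebra borel" and D: "sets D = sets borel"
  shows "jk K \<in> D \<rightarrow>\<^sub>M prob_algebra (borel \<Otimes>\<^sub>M borel)"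
  by (subst measurable_cong_sets[OF D refl]) (rule joint_kernel[OF K])

lemma joint_sets:
  fixes K :: "real^'p \<Rightarrow> (real^'p) measure"
  assumes K: "K \<in> borel \<rightarrow>\<^sub>M prob_algebra borel" and D: "prob_space D" "sets D = sets borel"
  shows "sets (joint D K) = sets (borel \<Otimes>\<^sub>M borel)"
  unfolding joint_eq using sets_bind'[OF D_in_pa[OF D] joint_kernel[OF K]] .

lemma joint_prob:
  fixes K :: "real^'p \<Rightarrow> (real^'p) measure"
  assumes K: "K \<in> borel \<rightarrow>\<^sub>M prob_algebra borel" and D: "prob_space D" "sets D = sets borel"
  shows "prob_space (joint D K)"
  unfolding joint_eq using prob_space_bind'[OF D_in_pa[OF D] joint_kernel[OF K]] .

lemma K_sets: "K \<in> borel \<rightarrow>\<^sub>M prob_algebra borel \<Longrightarrow> sets (K x) = sets borel"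
  using measurable_space[of K borel "prob_algebra borel" x] by (simp add: space_prob_algebra)

lemma K_prob: "K \<in> borel \<rightarrow>\<^sub>M prob_algebra borel \<Longrightarrow> prob_space (K x)"
  using measurable_space[of K borel "prob_algebra borel" x] by (simp add: space_prob_algebra)

lemma joint_nn:
  fixes K :: "real^'p \<Rightarrow> (real^'p) measure"
  assumes K: "K \<in> borel \<rightarrow>\<^sub>M prob_algebra borel" and D: "prob_space D" "sets D = sets borel"
    and f: "f \<in> borel_measurable (borel \<Otimes>\<^sub>M borel)"
  shows "(\<integral>\<^sup>+z. f z \<partial>joint D K) = (\<integral>\<^sup>+x. (\<integral>\<^sup>+y. f (x, y) \<partial>K x) \<partial>D)"
proof -
  have "(\<integral>\<^sup>+z. f z \<partial>joint D K) = (\<integral>\<^sup>+x. (\<integral>\<^sup>+z. f z \<partial>jk K x) \<partial>D)"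
    unfolding joint_eq
    by (rule nn_integral_bind[OF f measurable_prob_algebraD[OF joint_kernel_D[OF K D(2)]]])
  also have "\<dots> = (\<integral>\<^sup>+x. (\<integral>\<^sup>+y. f (x, y) \<partial>K x) \<partial>D)"
  proof (intro nn_integral_cong)
    fix x
    have Kx: "sets (K x) = sets borel" using K_sets[OF K] .
    have ret: "(\<lambda>y. return (borel \<Otimes>\<^sub>M borel) (x, y)) \<in> K x \<rightarrow>\<^sub>M subprob_algebra (borel \<Otimes>\<^sub>M borel)"
    proof -
      have "(\<lambda>y. (x, y)) \<in> (borel::(real^'p) measure) \<rightarrow>\<^sub>M borel \<Otimes>\<^sub>M borel" by simp
      from measurable_compose[OF this return_measurable]
      show ?thesis by (subst measurable_cong_sets[OF Kx refl]) simp
    qed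
    have "(\<integral>\<^sup>+z. f z \<partial>jk K x) = (\<integral>\<^sup>+y. (\<integral>\<^sup>+z. f z \<partial>return (borel \<Otimes>\<^sub>M borel) (x, y)) \<partial>K x)"
      unfolding jk_def by (rule nn_integral_bind[OF f ret])
    also have "\<dots> = (\<integral>\<^sup>+y. f (x, y) \<partial>K x)"
      by (rule nn_integral_cong, rule nn_integral_return) (simp_all add: f space_pair_measure)
    finally show "(\<integral>\<^sup>+z. f z \<partial>jk K x) = (\<integral>\<^sup>+y. f (x, y) \<partial>K x)" .
  qed
  finally show ?thesis .
qed



lemma cd_meas_comp:
  fixes f :: "real \<Rightarrow> real^'p \<Rightarrow> real"
  assumes "is_cond_density j \<mu> f" "g1 \<in> M \<rightarrow>\<^sub>M borel" "g2 \<in> M \<rightarrow>\<^sub>M borel"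
  shows "(\<lambda>z. f (g1 z) (g2 z)) \<in> borel_measurable M"
proof -
  have m: "(\<lambda>(t, x). f t x) \<in> borel_measurable (borel \<Otimes>\<^sub>M borel)" using assms unfolding is_cond_density_def by blast
  have "(\<lambda>z. (g1 z, g2 z)) \<in> M \<rightarrow>\<^sub>M borel \<Otimes>\<^sub>M borel" using assms(2,3) by measurable
  from measurable_compose[OF this m] show ?thesis by simp
qed

context kn begin

definition T where "T = joint PX K"
definition J where "J = joint D K"

lemma T_prob: "prob_space T" unfolding T_def by (rule joint_prob[OF Kk PX])
lemma J_prob: "prob_space J" unfolding J_def by (rule joint_prob[OF Kk prob_D sets_D])
lemma T_sets: "sets T = sets (borel \<Otimes>\<^sub>M borel)" unfolding T_def by (rule joint_sets[OF Kk PX])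
lemma J_sets: "sets J = sets (borel \<Otimes>\<^sub>M borel)" unfolding J_def by (rule joint_sets[OF Kk prob_D sets_D])

lemma mT: "f \<in> borel_measurable T \<longleftrightarrow> f \<in> borel_measurable (borel \<Otimes>\<^sub>M borel)"
  for f :: "(real^'p) \<times> (real^'p) \<Rightarrow> ennreal"
  by (subst measurable_cong_sets[OF T_sets refl]) (rule refl)
lemma mTr: "f \<in> borel_measurable T \<longleftrightarrow> f \<in> borel_measurable (borel \<Otimes>\<^sub>M borel)"
  for f :: "(real^'p) \<times> (real^'p) \<Rightarrow> real"
  by (subst measurable_cong_sets[OF T_sets refl]) (rule refl)
lemma mJ: "f \<in> borel_measurable J \<longleftrightarrow> f \<in> borel_measurable (borel \<Otimes>\<^sub>M borel)"
  for f :: "(real^'p) \<times> (real^'p) \<Rightarrow> ennreal"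
  by (subst measurable_cong_sets[OF J_sets refl]) (rule refl)
lemma mJr: "f \<in> borel_measurable J \<longleftrightarrow> f \<in> borel_measurable (borel \<Otimes>\<^sub>M borel)"
  for f :: "(real^'p) \<times> (real^'p) \<Rightarrow> real"
  by (subst measurable_cong_sets[OF J_sets refl]) (rule refl)

lemma Ksub: "K \<in> (borel::(real^'p) measure) \<rightarrow>\<^sub>M subprob_algebra borel"
  by (rule measurable_prob_algebraD[OF Kk])

lemma inner_meas:
  assumes "f \<in> borel_measurable ((borel::(real^'p) measure) \<Otimes>\<^sub>M (borel::(real^'p) measure))"
  shows "(\<lambda>x. \<integral>\<^sup>+y. f (x, y) \<partial>K x) \<in> borel_measurable borel"
proof -
  have "(\<lambda>(x, y). f (x, y)) \<in> borel_measurable ((borel::(real^'p) measure) \<Otimes>\<^sub>M (borel::(real^'p) measure))"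
    using assms by simp
  from nn_integral_measurable_subprob_algebra2[OF this Ksub] show ?thesis .
qed

lemma J_dens: "J = density T (\<lambda>z. ennreal (w (fst z)))"
proof (rule measure_eqI)
  show "sets J = sets (density T (\<lambda>z. ennreal (w (fst z))))" using J_sets T_sets by simp
next
  fix A assume A: "A \<in> sets J"
  then have Ab: "A \<in> sets (borel \<Otimes>\<^sub>M borel)" using J_sets by simp
  have ind: "indicator A \<in> borel_measurable ((borel::(real^'p) measure) \<Otimes>\<^sub>M (borel::(real^'p) measure))"
    using Ab by simp
  have "emeasure J A = (\<integral>\<^sup>+z. indicator A z \<partial>J)" using A by simp
  also have "\<dots> = (\<integral>\<^sup>+x. (\<integral>\<^sup>+y. indicator A (x, y) \<partial>K x) \<partial>D)"
    unfolding J_def by (rule joint_nn[OF Kk prob_D sets_D ind])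
  also have "\<dots> = (\<integral>\<^sup>+x. ennreal (w x) * (\<integral>\<^sup>+y. indicator A (x, y) \<partial>K x) \<partial>PX)"
    unfolding D_def using inner_meas[OF ind] by (subst nn_integral_density) (auto simp: mPX)
  also have "\<dots> = (\<integral>\<^sup>+x. (\<integral>\<^sup>+y. ennreal (w x) * indicator A (x, y) \<partial>K x) \<partial>PX)"
  proof (intro nn_integral_cong)
    fix x
    have "(\<lambda>y. indicator A (x, y) :: ennreal) \<in> borel_measurable (K x)"
      by (subst measurable_cong_sets[OF K_sets[OF Kk] refl]) (rule measurable_compose[OF _ ind, of "\<lambda>y. (x, y)", simplified], simp)
    then show "ennreal (w x) * (\<integral>\<^sup>+y. indicator A (x, y) \<partial>K x) = (\<integral>\<^sup>+y. ennreal (w x) * indicator A (x, y) \<partial>K x)"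
      by (rule nn_integral_cmult[symmetric])
  qed
  also have "\<dots> = (\<integral>\<^sup>+z. ennreal (w (fst z)) * indicator A z \<partial>T)"
  proof -
    have wm: "(\<lambda>z. ennreal (w (fst z)) * indicator A z) \<in> borel_measurable ((borel::(real^'p) measure) \<Otimes>\<^sub>M (borel::(real^'p) measure))"
      using Ab by measurable
    show ?thesis unfolding T_def by (subst joint_nn[OF Kk PX wm]) simp
  qed
  also have "\<dots> = emeasure (density T (\<lambda>z. ennreal (w (fst z)))) A"
    using Ab by (subst emeasure_density) (auto simp: mT T_sets)
  finally show "emeasure J A = emeasure (density T (\<lambda>z. ennreal (w (fst z)))) A" .
qed

end


lemma vec_nth_meas[measurable (raw)]:
  "f \<in> M \<rightarrow>\<^sub>M (borel::(real^'p) measure) \<Longrightarrow> (\<lambda>x. f x $ i) \<in> borel_measurable M"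
proof -
  assume f: "f \<in> M \<rightarrow>\<^sub>M (borel::(real^'p) measure)"
  have "(\<lambda>x::real^'p. x $ i) \<in> borel_measurable borel" by measurable
  from measurable_compose[OF f this] show ?thesis .
qed

lemma joint_AE_fst:
  fixes K :: "real^'p \<Rightarrow> (real^'p) measure"
  assumes K: "K \<in> borel \<rightarrow>\<^sub>M prob_algebra borel" and M: "prob_space M" "sets M = sets borel"
    and ae: "AE x in M. P x"
  shows "AE z in joint M K. P (fst z)"
proof -
  obtain N where N: "{x \<in> space M. \<not> P x} \<subseteq> N" "emeasure M N = 0" "N \<in> sets M"
    using ae by (auto elim!: AE_E)
  have Nb: "N \<in> sets borel" using N(3) M(2) by simp
  have spM: "space M = UNIV" using sets_eq_imp_space_eq[OF M(2)] by simp
  let ?N = "N \<times> (UNIV :: (real^'p) set)"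
  have Nb2: "?N \<in> sets ((borel::(real^'p) measure) \<Otimes>\<^sub>M (borel::(real^'p) measure))"
    using Nb by (metis pair_measureI sets.top space_borel)
  have ind: "indicator ?N \<in> borel_measurable ((borel::(real^'p) measure) \<Otimes>\<^sub>M (borel::(real^'p) measure))"
    using Nb2 by simp
  have "emeasure (joint M K) ?N = (\<integral>\<^sup>+z. indicator ?N z \<partial>joint M K)"
    using Nb2 joint_sets[OF K M] by simp
  also have "\<dots> = (\<integral>\<^sup>+x. (\<integral>\<^sup>+y. indicator ?N (x, y) \<partial>K x) \<partial>M)"
    by (rule joint_nn[OF K M ind])
  also have "\<dots> = (\<integral>\<^sup>+x. indicator N x \<partial>M)"
  proof (intro nn_integral_cong)
    fix x
    interpret Kx: prob_space "K x" using K_prob[OF K] .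
    have "(\<integral>\<^sup>+y. indicator ?N (x, y) \<partial>K x) = (\<integral>\<^sup>+y. indicator N x \<partial>K x)"
      by (intro nn_integral_cong) (simp split: split_indicator)
    also have "\<dots> = indicator N x" by (simp add: Kx.emeasure_space_1)
    finally show "(\<integral>\<^sup>+y. indicator ?N (x, y) \<partial>K x) = indicator N x" .
  qed
  also have "\<dots> = 0" using N(2,3) by simp
  finally have null: "?N \<in> null_sets (joint M K)"
    using Nb2 joint_sets[OF K M] by (simp add: null_sets_def)
  show ?thesis
  proof (rule AE_I'[OF null])
    show "{z \<in> space (joint M K). \<not> P (fst z)} \<subseteq> ?N"
      using N(1) spM by auto
  qed
qed

context kn begin

definition pa where "pa z = p (fst z $ j) (fst z)"
definition pb where "pb z = p (snd z $ j) (fst z)"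
definition qa where "qa z = q (fst z $ j) (fst z)"
definition qb where "qb z = q (snd z $ j) (fst z)"
definition a where "a z = pa z / qa z"
definition b where "b z = pb z / qb z"
definition h where "h z = ln ((pa z * qb z) / (qa z * pb z))"

lemma pq_meas[measurable]:
  "pa \<in> borel_measurable ((borel::(real^'p) measure) \<Otimes>\<^sub>M (borel::(real^'p) measure))"
  "pb \<in> borel_measurable ((borel::(real^'p) measure) \<Otimes>\<^sub>M (borel::(real^'p) measure))"
  "qa \<in> borel_measurable ((borel::(real^'p) measure) \<Otimes>\<^sub>M (borel::(real^'p) measure))"
  "qb \<in> borel_measurable ((borel::(real^'p) measure) \<Otimes>\<^sub>M (borel::(real^'p) measure))"
  unfolding pa_def pb_def qa_def qb_def
  by (intro cd_meas_comp[OF cdP] cd_meas_comp[OF cdQ]; measurable)+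

lemma abh_meas[measurable]:
  "a \<in> borel_measurable ((borel::(real^'p) measure) \<Otimes>\<^sub>M (borel::(real^'p) measure))"
  "b \<in> borel_measurable ((borel::(real^'p) measure) \<Otimes>\<^sub>M (borel::(real^'p) measure))"
  "h \<in> borel_measurable ((borel::(real^'p) measure) \<Otimes>\<^sub>M (borel::(real^'p) measure))"
  unfolding a_def b_def h_def by measurable

lemma F1: "AE x in PX. 0 < p (x $ j) x"
proof (rule AE_I')
  let ?N = "{x. p (x $ j) x = 0}"
  have Nb: "?N \<in> sets borel" using cd_meas2[OF cdP] by measurable
  have "emeasure PX ?N = (\<integral>\<^sup>+x. (\<integral>\<^sup>+ t. ennreal (p t x) * indicator ?N (setc x j t) \<partial>\<mu>) \<partial>PX)"
    using hcP Nb unfolding has_cond_density_def by blast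
  also have "\<dots> = (\<integral>\<^sup>+x. 0 \<partial>PX)"
  proof -
    have z: "ennreal (p t x) * indicator ?N (setc x j t) = 0" for x t
      by (simp add: p_inv split: split_indicator)
    show ?thesis by (simp add: z)
  qed
  finally show "?N \<in> null_sets PX" using Nb PX(2) by (simp add: null_sets_def)
  show "{x \<in> space PX. \<not> 0 < p (x $ j) x} \<subseteq> ?N" using p_nn by (auto simp: less_le)
qed

lemma F2: "AE z in T. 0 < pa z"
  unfolding T_def pa_def by (rule joint_AE_fst[OF Kk PX F1])

lemma w_pos: "0 < w x \<Longrightarrow> 0 < q (x $ j) x"
  unfolding w_def using q_nn[of "x $ j" x] p_nn[of "x $ j" x] by (auto simp: zero_less_divide_iff)

lemma F3D: "AE x in D. 0 < q (x $ j) x"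
  unfolding D_def by (subst AE_density) (auto simp: mPX intro!: AE_I2 w_pos)

lemma F3: "AE z in J. 0 < qa z"
  unfolding J_def qa_def by (rule joint_AE_fst[OF Kk prob_D sets_D F3D])

lemma swap_meas: "swapj j \<in> ((borel::(real^'p) measure) \<Otimes>\<^sub>M (borel::(real^'p) measure)) \<rightarrow>\<^sub>M (borel \<Otimes>\<^sub>M borel)"
proof -
  have "(\<lambda>z. setc (fst z) j (snd z $ j)) \<in> ((borel::(real^'p) measure) \<Otimes>\<^sub>M (borel::(real^'p) measure)) \<rightarrow>\<^sub>M (borel::(real^'p) measure)"
    by (rule setc_meas_pair) measurable
  moreover have "(\<lambda>z. setc (snd z) j (fst z $ j)) \<in> ((borel::(real^'p) measure) \<Otimes>\<^sub>M (borel::(real^'p) measure)) \<rightarrow>\<^sub>M (borel::(real^'p) measure)"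
    by (rule setc_meas_pair) measurable
  ultimately show ?thesis unfolding swapj_def by (intro measurable_Pair) auto
qed

lemma swapJ: "distr J (borel \<Otimes>\<^sub>M borel) (swapj j) = J"
  using exch prob_D sets_D hc_D unfolding pairwise_exch_def J_def by blast

lemma swapJ': "swapj j \<in> J \<rightarrow>\<^sub>M (borel \<Otimes>\<^sub>M borel)"
  by (subst measurable_cong_sets[OF J_sets refl]) (rule swap_meas)

lemma qa_swap: "qa (swapj j z) = qb z" unfolding qa_def qb_def swapj_def by (simp add: q_inv)
lemma pa_swap: "pa (swapj j z) = pb z" unfolding pa_def pb_def swapj_def by (simp add: p_inv)
lemma qb_swap: "qb (swapj j z) = qa z"
  unfolding qa_def qb_def swapj_def by (simp add: q_inv)
lemma pb_swap: "pb (swapj j z) = pa z"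
  unfolding pa_def pb_def swapj_def by (simp add: p_inv)

lemma F4: "AE z in J. 0 < qb z"
proof -
  have "AE z in distr J (borel \<Otimes>\<^sub>M borel) (swapj j). 0 < qa z" by (subst swapJ) (rule F3)
  from AE_distrD[OF swapJ' this] show ?thesis by (simp add: qa_swap)
qed

lemma pa_pos_iff: "0 < pa z \<longleftrightarrow> 0 < qa z" unfolding pa_def qa_def using supp by blast
lemma pb_pos_iff: "0 < pb z \<longleftrightarrow> 0 < qb z" unfolding pb_def qb_def using supp by blast

lemma wa_one: "0 < pa z \<Longrightarrow> w (fst z) * a z = 1"
  using pa_pos_iff[of z] unfolding w_def a_def pa_def qa_def by simp

lemma F5: "AE z in T. 0 < pb z"
proof (rule AE_I')
  let ?B = "{z. \<not> 0 < pb z}"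
  have "pb -` {..0} \<inter> space ((borel::(real^'p) measure) \<Otimes>\<^sub>M (borel::(real^'p) measure)) \<in> sets ((borel::(real^'p) measure) \<Otimes>\<^sub>M (borel::(real^'p) measure))"
    by (rule measurable_sets[OF pq_meas(2)]) simp
  moreover have "pb -` {..0} \<inter> space ((borel::(real^'p) measure) \<Otimes>\<^sub>M (borel::(real^'p) measure)) = ?B"
    by (auto simp: space_pair_measure not_less)
  ultimately have Bb: "?B \<in> sets ((borel::(real^'p) measure) \<Otimes>\<^sub>M (borel::(real^'p) measure))" by simp
  have "emeasure T ?B = (\<integral>\<^sup>+z. indicator ?B z \<partial>T)" using Bb T_sets by simp
  also have "\<dots> = (\<integral>\<^sup>+z. ennreal (w (fst z)) * (ennreal (a z) * indicator ?B z) \<partial>T)"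
    using F2
  proof (intro nn_integral_cong_AE, eventually_elim)
    case (elim z)
    have wa: "w (fst z) * a z = 1" using elim wa_one by blast
    have "ennreal (w (fst z)) * ennreal (a z) = 1"
      using wa w_nn[of "fst z"] by (simp add: ennreal_mult'[symmetric])
    then show ?case by (simp add: mult.assoc[symmetric])
  qed
  also have "\<dots> = (\<integral>\<^sup>+z. ennreal (a z) * indicator ?B z \<partial>J)"
    unfolding J_dens using Bb by (subst nn_integral_density) (auto simp: mT)
  also have "\<dots> = (\<integral>\<^sup>+z. 0 \<partial>J)"
    using F4 by (intro nn_integral_cong_AE, eventually_elim) (auto simp: pb_pos_iff)
  finally show "?B \<in> null_sets T" using Bb T_sets by (simp add: null_sets_def)
  show "{z \<in> space T. \<not> 0 < pb z} \<subseteq> ?B" by auto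
qed

end


context kn begin

lemma hb: "h z \<le> \<delta>" unfolding h_def pa_def pb_def qa_def qb_def by (rule bound)
lemma hbs: "ln ((pb z * qa z) / (qb z * pa z)) \<le> \<delta>" unfolding pa_def pb_def qa_def qb_def by (rule bound)

lemma h_lower: assumes "0 < pa z" "0 < pb z" shows "- \<delta> \<le> h z"
proof -
  have qa: "0 < qa z" "0 < qb z" using assms pa_pos_iff[of z] pb_pos_iff[of z] by auto
  have "(pb z * qa z) / (qb z * pa z) = inverse ((pa z * qb z) / (qa z * pb z))"
    by (simp add: field_simps)
  moreover have "0 < (pa z * qb z) / (qa z * pb z)" using assms qa by simp
  ultimately have "ln ((pb z * qa z) / (qb z * pa z)) = - h z"
    unfolding h_def by (metis ln_inverse)
  then show ?thesis using hbs[of z] by simp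
qed

lemma h_abs: assumes "0 < pa z" "0 < pb z" shows "\<bar>h z\<bar> \<le> \<delta>"
  using h_lower[OF assms] hb[of z] by simp

lemma h_AE_T: "AE z in T. h z \<in> {-\<delta>..\<delta>}"
  using F2 F5 by eventually_elim (use h_lower hb in auto)

lemma J_pos: "AE z in J. 0 < pa z \<and> 0 < pb z"
  using F3 F4 by eventually_elim (use pa_pos_iff pb_pos_iff in blast)

lemma a_nn: "0 \<le> a z" unfolding a_def pa_def qa_def using p_nn q_nn by simp
lemma b_nn: "0 \<le> b z" unfolding b_def pb_def qb_def using p_nn q_nn by simp

lemma a_swap: "a (swapj j z) = b z" unfolding a_def b_def by (simp add: pa_swap qa_swap)
lemma h_swap: assumes "0 < pa z" "0 < pb z" shows "h (swapj j z) = - h z"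
proof -
  have qa: "0 < qa z" "0 < qb z" using assms pa_pos_iff[of z] pb_pos_iff[of z] by auto
  have "(pb z * qa z) / (qb z * pa z) = inverse ((pa z * qb z) / (qa z * pb z))"
    by (simp add: field_simps)
  moreover have "0 < (pa z * qb z) / (qa z * pb z)" using assms qa by simp
  ultimately have "ln ((pb z * qa z) / (qb z * pa z)) = - h z"
    unfolding h_def by (metis ln_inverse)
  then show ?thesis
    unfolding h_def by (simp add: pa_swap pb_swap qa_swap qb_swap)
qed

lemma swap_comp: "f \<in> borel_measurable (borel \<Otimes>\<^sub>M borel) \<Longrightarrow> (\<lambda>z. f (swapj j z)) \<in> borel_measurable (borel \<Otimes>\<^sub>M borel)"
  for f :: "(real^'p) \<times> (real^'p) \<Rightarrow> real"
  using measurable_compose[OF swap_meas] by blast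

lemma nn_a_J: "(\<integral>\<^sup>+z. ennreal (a z) \<partial>J) = 1"
proof -
  have "(\<integral>\<^sup>+z. ennreal (a z) \<partial>J) = (\<integral>\<^sup>+z. ennreal (w (fst z)) * ennreal (a z) \<partial>T)"
    unfolding J_dens by (subst nn_integral_density) (auto simp: mT)
  also have "\<dots> = (\<integral>\<^sup>+z. 1 \<partial>T)"
    using F2
  proof (intro nn_integral_cong_AE, eventually_elim)
    case (elim z)
    have wa: "w (fst z) * a z = 1" using elim wa_one by blast
    then show ?case using w_nn[of "fst z"] by (simp add: ennreal_mult'[symmetric])
  qed
  also have "\<dots> = 1" using prob_space.emeasure_space_1[OF T_prob] by simp
  finally show ?thesis .
qed

lemma int_a: "integrable J a"
  by (rule integrableI_nonneg) (auto simp: mJr a_nn nn_a_J)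

lemma int_b: "integrable J b"
proof -
  have "integrable (distr J (borel \<Otimes>\<^sub>M borel) (swapj j)) a" using int_a swapJ by simp
  then have "integrable J (\<lambda>z. a (swapj j z))"
    by (subst (asm) integrable_distr_eq[OF swapJ']) auto
  then show ?thesis by (simp add: a_swap)
qed

lemma integral_a: "integral\<^sup>L J a = 1"
proof -
  have "integral\<^sup>L J a = enn2real (\<integral>\<^sup>+z. ennreal (a z) \<partial>J)"
    by (rule integral_eq_nn_integral) (auto simp: mJr a_nn)
  then show ?thesis using nn_a_J by simp
qed

lemma integral_b: "integral\<^sup>L J b = 1"
proof -
  have "integral\<^sup>L J b = integral\<^sup>L J (\<lambda>z. a (swapj j z))" by (simp add: a_swap)
  also have "\<dots> = integral\<^sup>L (distr J (borel \<Otimes>\<^sub>M borel) (swapj j)) a"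
    by (rule integral_distr[symmetric, OF swapJ']) simp
  also have "\<dots> = 1" using swapJ integral_a by simp
  finally show ?thesis .
qed

lemma int_ah: "integrable J (\<lambda>z. a z * h z)"
proof (rule Bochner_Integration.integrable_bound)
  show "integrable J (\<lambda>z. \<delta> * a z)" using int_a by simp
  show "(\<lambda>z. a z * h z) \<in> borel_measurable J" by (simp add: mJr)
  show "AE z in J. norm (a z * h z) \<le> norm (\<delta> * a z)"
    using J_pos
  proof eventually_elim
    case (elim z)
    have "\<bar>h z\<bar> \<le> \<delta>" using h_abs elim by blast
    then have "a z * \<bar>h z\<bar> \<le> a z * \<delta>" using a_nn[of z] by (rule mult_left_mono)
    then show ?case using a_nn[of z] \<delta> by (simp add: abs_mult mult.commute)
  qed
qed

lemma int_bh: "integrable J (\<lambda>z. b z * h z)"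
proof (rule Bochner_Integration.integrable_bound)
  show "integrable J (\<lambda>z. \<delta> * b z)" using int_b by simp
  show "(\<lambda>z. b z * h z) \<in> borel_measurable J" by (simp add: mJr)
  show "AE z in J. norm (b z * h z) \<le> norm (\<delta> * b z)"
    using J_pos
  proof eventually_elim
    case (elim z)
    have "\<bar>h z\<bar> \<le> \<delta>" using h_abs elim by blast
    then have "b z * \<bar>h z\<bar> \<le> b z * \<delta>" using b_nn[of z] by (rule mult_left_mono)
    then show ?case using b_nn[of z] \<delta> by (simp add: abs_mult mult.commute)
  qed
qed

lemma step1: "integral\<^sup>L T h = integral\<^sup>L J (\<lambda>z. a z * h z)"
proof -
  have "integral\<^sup>L J (\<lambda>z. a z * h z) = integral\<^sup>L T (\<lambda>z. w (fst z) *\<^sub>R (a z * h z))"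
    unfolding J_dens by (rule integral_density) (auto simp: mTr w_nn)
  also have "\<dots> = integral\<^sup>L T h"
  proof (rule integral_cong_AE)
    show "AE z in T. w (fst z) *\<^sub>R (a z * h z) = h z"
      using F2
    proof eventually_elim
      case (elim z)
      have "w (fst z) * a z = 1" using elim wa_one by blast
      then show ?case by (simp add: mult.assoc[symmetric])
    qed
  qed (auto simp: mTr)
  finally show ?thesis by simp
qed

lemma step2: "integral\<^sup>L J (\<lambda>z. a z * h z) = - integral\<^sup>L J (\<lambda>z. b z * h z)"
proof -
  have "integral\<^sup>L J (\<lambda>z. a z * h z) = integral\<^sup>L (distr J (borel \<Otimes>\<^sub>M borel) (swapj j)) (\<lambda>z. a z * h z)"
    using swapJ by simp
  also have "\<dots> = integral\<^sup>L J (\<lambda>z. a (swapj j z) * h (swapj j z))"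
    by (rule integral_distr[OF swapJ']) simp
  also have "\<dots> = integral\<^sup>L J (\<lambda>z. - (b z * h z))"
  proof (rule integral_cong_AE)
    show "AE z in J. a (swapj j z) * h (swapj j z) = - (b z * h z)"
      using J_pos by eventually_elim (simp add: a_swap h_swap)
  qed (auto simp: mJr intro!: borel_measurable_times swap_comp)
  also have "\<dots> = - integral\<^sup>L J (\<lambda>z. b z * h z)" by simp
  finally show ?thesis .
qed

lemma expectation_bound: "integral\<^sup>L T h \<le> \<delta>\<^sup>2 / 2"
proof -
  have "2 * integral\<^sup>L T h = integral\<^sup>L J (\<lambda>z. a z * h z) - integral\<^sup>L J (\<lambda>z. b z * h z)"
    using step1 step2 by simp
  also have "\<dots> = integral\<^sup>L J (\<lambda>z. a z * h z - b z * h z)"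
    by (simp add: Bochner_Integration.integral_diff[OF int_ah int_bh])
  also have "\<dots> = integral\<^sup>L J (\<lambda>z. (a z - b z) * h z)"
    by (simp add: algebra_simps)
  also have "\<dots> \<le> integral\<^sup>L J (\<lambda>z. (a z + b z) * \<delta>\<^sup>2 / 2)"
  proof (rule integral_mono_AE)
    show "integrable J (\<lambda>z. (a z - b z) * h z)"
      using Bochner_Integration.integrable_diff[OF int_ah int_bh] by (simp add: algebra_simps)
    show "integrable J (\<lambda>z. (a z + b z) * \<delta>\<^sup>2 / 2)"
      using Bochner_Integration.integrable_add[OF int_a int_b] by simp
    show "AE z in J. (a z - b z) * h z \<le> (a z + b z) * \<delta>\<^sup>2 / 2"
      using J_pos
    proof eventually_elim
      case (elim z)
      have qa: "0 < qa z" "0 < qb z" using elim pa_pos_iff[of z] pb_pos_iff[of z] by auto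
      have ab: "0 < a z" "0 < b z" unfolding a_def b_def using elim qa by auto
      have hz: "h z = ln (a z / b z)" unfolding h_def a_def b_def using qa elim by (simp add: field_simps)
      show ?case using key_ineq[OF ab, of \<delta>] h_abs[of z] elim by (simp add: hz)
    qed
  qed
  also have "\<dots> = (integral\<^sup>L J a + integral\<^sup>L J b) * \<delta>\<^sup>2 / 2"
    using int_a int_b by (simp add: Bochner_Integration.integral_add)
  also have "\<dots> = \<delta>\<^sup>2" using integral_a integral_b by simp
  finally show ?thesis by simp
qed

end


lemma indep_components:
  assumes T: "prob_space T" and I: "finite I" "I \<noteq> {}"
  shows "prob_space.indep_vars (PiM I (\<lambda>_. T)) (\<lambda>_. T) (\<lambda>i \<omega>. \<omega> i) I"
proof -
  interpret O: prob_space "PiM I (\<lambda>_. T)" using prob_space_PiM[of I "\<lambda>_. T"] T by simp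
  show ?thesis
  proof (subst O.indep_vars_iff_distr_eq_PiM'[OF I(2)])
    show "\<And>i. i \<in> I \<Longrightarrow> (\<lambda>\<omega>. \<omega> i) \<in> PiM I (\<lambda>_. T) \<rightarrow>\<^sub>M T"
      by (rule measurable_component_singleton)
    have "distr (PiM I (\<lambda>_. T)) (PiM I (\<lambda>_. T)) (\<lambda>x. \<lambda>i\<in>I. x i) = distr (PiM I (\<lambda>_. T)) (PiM I (\<lambda>_. T)) (\<lambda>x. x)"
      by (rule distr_cong) (auto simp: space_PiM PiE_def extensional_restrict)
    also have "\<dots> = PiM I (\<lambda>_. T)" by (rule distr_id)
    also have "\<dots> = PiM I (\<lambda>i. distr (PiM I (\<lambda>_. T)) T (\<lambda>\<omega>. \<omega> i))"
      by (rule PiM_cong) (auto simp: distr_PiM_component[of I "\<lambda>_. T", simplified] T)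
    finally show "distr (PiM I (\<lambda>_. T)) (PiM I (\<lambda>_. T)) (\<lambda>x. \<lambda>i\<in>I. x i) = PiM I (\<lambda>i. distr (PiM I (\<lambda>_. T)) T (\<lambda>\<omega>. \<omega> i))" .
  qed
qed

context kn begin

lemma KL_eq: "KLhat n j p q \<omega> = (\<Sum>i<n. h (\<omega> i))"
  unfolding KLhat_def h_def pa_def pb_def qa_def qb_def by simp

definition Om where "Om (n::nat) = PiM {..<n} (\<lambda>_. T)"

lemma Om_prob: "prob_space (Om n)"
  unfolding Om_def using prob_space_PiM[of "{..<n}" "\<lambda>_. T"] T_prob by simp

lemma hT_meas: "h \<in> borel_measurable T" by (simp add: mTr)

lemma h_comp_meas: "i < n \<Longrightarrow> (\<lambda>\<omega>. h (\<omega> i)) \<in> borel_measurable (Om n)"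
proof -
  assume i: "i < n"
  have "(\<lambda>\<omega>. \<omega> i) \<in> PiM {..<n} (\<lambda>_. T) \<rightarrow>\<^sub>M T" using i by (intro measurable_component_singleton) simp
  from measurable_compose[OF this hT_meas] show ?thesis unfolding Om_def .
qed

lemma KL_meas: "(\<lambda>\<omega>. KLhat n j p q \<omega>) \<in> borel_measurable (Om n)"
  unfolding KL_eq by (intro borel_measurable_sum h_comp_meas) simp

lemma indep_h: "0 < n \<Longrightarrow> prob_space.indep_vars (Om n) (\<lambda>_. borel) (\<lambda>i \<omega>. h (\<omega> i)) {..<n}"
proof -
  assume n: "0 < n"
  interpret O: prob_space "Om n" by (rule Om_prob)
  have "O.indep_vars (\<lambda>_. T) (\<lambda>i \<omega>. \<omega> i) {..<n}"
  proof -
    have f: "finite {..<n}" by simp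
    have ne: "{..<n} \<noteq> {}" using n by auto
    show ?thesis using indep_components[OF T_prob f ne] unfolding Om_def .
  qed
  then show ?thesis by (rule O.indep_vars_compose2) (rule hT_meas)
qed

lemma expect_i: "i < n \<Longrightarrow> integral\<^sup>L (Om n) (\<lambda>\<omega>. h (\<omega> i)) = integral\<^sup>L T h"
proof -
  assume i: "i < n"
  have "integral\<^sup>L (Om n) (\<lambda>\<omega>. h (\<omega> i)) = integral\<^sup>L (distr (Om n) T (\<lambda>\<omega>. \<omega> i)) h"
    unfolding Om_def by (rule integral_distr[symmetric]) (use i hT_meas in auto)
  also have "distr (Om n) T (\<lambda>\<omega>. \<omega> i) = T"
    unfolding Om_def using i T_prob by (intro distr_PiM_component) auto
  finally show ?thesis .
qed

lemma AE_i: "i < n \<Longrightarrow> AE \<omega> in Om n. h (\<omega> i) \<in> {-\<delta>..\<delta>}"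
  unfolding Om_def by (rule AE_PiM_component[where P = "\<lambda>z. h z \<in> {-\<delta>..\<delta>}"]) (use T_prob h_AE_T in auto)

lemma tail:
  assumes "0 < \<delta>" "0 < n" "0 \<le> \<epsilon>"
  shows "measure (Om n) {\<omega> \<in> space (Om n). (\<Sum>i<n. h (\<omega> i)) \<ge> real n * integral\<^sup>L T h + \<epsilon>}
           \<le> exp (-2 * \<epsilon>\<^sup>2 / (real n * (2 * \<delta>)\<^sup>2))"
proof -
  interpret H: Hoeffding_ineq "Om n" "{..<n}" "\<lambda>i \<omega>. h (\<omega> i)" "\<lambda>_. -\<delta>" "\<lambda>_. \<delta>"
      "\<Sum>i\<in>{..<n}. prob_space.expectation (Om n) (\<lambda>\<omega>. h (\<omega> i))"
  proof -
    have H0: "indep_interval_bounded_random_variables (Om n) {..<n} (\<lambda>i \<omega>. h (\<omega> i)) (\<lambda>_. -\<delta>) (\<lambda>_. \<delta>)"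
      unfolding indep_interval_bounded_random_variables_def indep_interval_bounded_random_variables_axioms_def
    proof (intro conjI ballI allI impI)
      show "prob_space (Om n)" by (rule Om_prob)
      show "finite {..<n}" by simp
      show "prob_space.indep_vars (Om n) (\<lambda>_. borel) (\<lambda>i \<omega>. h (\<omega> i)) {..<n}" by (rule indep_h[OF assms(2)])
      fix i assume "i \<in> {..<n}"
      then show "AE \<omega> in Om n. h (\<omega> i) \<in> {-\<delta>..\<delta>}" using AE_i by simp
    qed
    show "Hoeffding_ineq (Om n) {..<n} (\<lambda>i \<omega>. h (\<omega> i)) (\<lambda>_. -\<delta>) (\<lambda>_. \<delta>)" unfolding Hoeffding_ineq_def by (rule H0)
  qed
  have mu: "(\<Sum>i\<in>{..<n}. integral\<^sup>L (Om n) (\<lambda>\<omega>. h (\<omega> i))) = real n * integral\<^sup>L T h"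
    by (simp add: expect_i)
  have "(\<Sum>i\<in>{..<n}. (\<delta> - - \<delta>)\<^sup>2) = real n * (2 * \<delta>)\<^sup>2" by simp
  moreover have "0 < real n * (2 * \<delta>)\<^sup>2" using assms by simp
  ultimately show ?thesis
    using H.Hoeffding_ineq_ge[OF assms(3)] mu by simp
qed

end


theorem lemma2:
  fixes PX :: "(real^'p) measure"
    and \<mu> :: "'p \<Rightarrow> real measure"
    and P Q :: "'p \<Rightarrow> real \<Rightarrow> real^'p \<Rightarrow> real"
    and K :: "real^'p \<Rightarrow> (real^'p) measure"
    and n :: nat and \<delta> :: real
  assumes PX: "prob_space PX" "sets PX = sets borel"
    and ref: "\<And>j. ref_measure (\<mu> j)"
    and P_true: "\<And>j. has_cond_density PX j (\<mu> j) (P j)"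
    and Q_dens: "\<And>j. is_cond_density j (\<mu> j) (Q j)"
    and same_supp: "\<And>j t x. 0 < P j t x \<longleftrightarrow> 0 < Q j t x"
    and K_kernel: "K \<in> borel \<rightarrow>\<^sub>M prob_algebra borel"
    and exch: "\<And>j. pairwise_exch K j (\<mu> j) (Q j)"
    and \<delta>: "0 \<le> \<delta>"
    and bound: "\<And>j t t' x. ln ((P j t x * Q j t' x) / (Q j t x * P j t' x)) \<le> \<delta>"
  shows "measure (\<Pi>\<^sub>M i\<in>{..<n}. joint PX K)
           {\<omega> \<in> space (\<Pi>\<^sub>M i\<in>{..<n}. joint PX K).
              Max (range (\<lambda>j. KLhat n j (P j) (Q j) \<omega>))
                \<le> real n * \<delta>\<^sup>2 / 2 + 2 * sqrt (real n * ln (real CARD('p))) * \<delta>}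
         \<ge> 1 - 1 / real CARD('p)"
proof -
  define \<Omega> where "\<Omega> = (\<Pi>\<^sub>M i\<in>{..<n}. joint PX K)"
  define thr where "thr = real n * \<delta>\<^sup>2 / 2 + 2 * sqrt (real n * ln (real CARD('p))) * \<delta>"
  define KL where "KL j \<omega> = KLhat n j (P j) (Q j) \<omega>" for j \<omega>
  define pp where "pp = real CARD('p)"
  have pp1: "1 \<le> pp" unfolding pp_def by simp
  have knj: "kn PX j (\<mu> j) (P j) (Q j) K \<delta>" for j
    unfolding kn_def using PX ref P_true Q_dens same_supp K_kernel exch \<delta> bound by blast
  have Om: "kn.Om PX K n = \<Omega>"
  proof -
    interpret kj: kn PX "undefined::'p" "\<mu> undefined" "P undefined" "Q undefined" K \<delta> by (rule knj)
    show ?thesis unfolding \<Omega>_def kj.Om_def kj.T_def ..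
  qed
  interpret O: prob_space \<Omega>
    using kn.Om_prob[OF knj] Om by metis
  have KLm: "KL j \<in> borel_measurable \<Omega>" for j
  proof -
    interpret kj: kn PX j "\<mu> j" "P j" "Q j" K \<delta> by (rule knj)
    show ?thesis using kj.KL_meas[of n] Om unfolding KL_def by metis
  qed
  have setc: "{\<omega> \<in> space \<Omega>. KL j \<omega> \<le> thr} \<in> O.events" for j
    using KLm[of j] by measurable
  have Seq: "{\<omega> \<in> space \<Omega>. Max (range (\<lambda>j. KL j \<omega>)) \<le> thr} = space \<Omega> \<inter> (\<Inter>j. {\<omega> \<in> space \<Omega>. KL j \<omega> \<le> thr})"
    by (auto simp: Max_le_iff)
  have Sev: "{\<omega> \<in> space \<Omega>. Max (range (\<lambda>j. KL j \<omega>)) \<le> thr} \<in> O.events"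
    unfolding Seq using setc by (intro sets.Int sets.top sets.finite_INT) auto
  have goal: "O.prob {\<omega> \<in> space \<Omega>. Max (range (\<lambda>j. KL j \<omega>)) \<le> thr} \<ge> 1 - 1 / pp"
  proof (cases "n = 0 \<or> \<delta> = 0")
    case True
    have thr0: "thr = 0" unfolding thr_def using True by auto
    have "AE \<omega> in \<Omega>. \<forall>j. KL j \<omega> \<le> real n * \<delta>"
    proof (subst AE_all_countable, intro allI)
      fix j
      interpret kj: kn PX j "\<mu> j" "P j" "Q j" K \<delta> by (rule knj)
      have "AE \<omega> in \<Omega>. \<forall>i\<in>{..<n}. kj.h (\<omega> i) \<in> {-\<delta>..\<delta>}"
        using kj.AE_i Om by (intro eventually_ball_finite) auto
      then show "AE \<omega> in \<Omega>. KL j \<omega> \<le> real n * \<delta>"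
      proof eventually_elim
        case (elim \<omega>)
        have "KL j \<omega> = (\<Sum>i<n. kj.h (\<omega> i))" unfolding KL_def by (rule kj.KL_eq)
        also have "\<dots> \<le> (\<Sum>i<n. \<delta>)" using elim by (intro sum_mono) auto
        finally show ?case by simp
      qed
    qed
    then have "AE \<omega> in \<Omega>. \<omega> \<in> {\<omega> \<in> space \<Omega>. Max (range (\<lambda>j. KL j \<omega>)) \<le> thr}"
      using AE_space
    proof eventually_elim
      case (elim \<omega>)
      have "real n * \<delta> = 0" using True by auto
      then show ?case using elim thr0 by (auto simp: Max_le_iff)
    qed
    then have "O.prob {\<omega> \<in> space \<Omega>. Max (range (\<lambda>j. KL j \<omega>)) \<le> thr} = 1"
      using O.AE_in_set_eq_1[OF Sev] by simp
    moreover have "0 \<le> 1 / pp" using pp1 by simp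
    ultimately show ?thesis by simp
  next
    case False
    then have n: "0 < n" and d: "0 < \<delta>" using \<delta> by auto
    define B where "B j = {\<omega> \<in> space \<Omega>. \<not> KL j \<omega> \<le> thr}" for j
    have Bev: "B j \<in> O.events" for j
      unfolding B_def using KLm[of j] by measurable
    have Bj: "O.prob (B j) \<le> 1 / pp\<^sup>2" for j
    proof -
      interpret kj: kn PX j "\<mu> j" "P j" "Q j" K \<delta> by (rule knj)
      define \<epsilon> where "\<epsilon> = 2 * sqrt (real n * ln pp) * \<delta>"
      have lnp: "0 \<le> ln pp" using pp1 by simp
      have eps: "0 \<le> \<epsilon>" unfolding \<epsilon>_def using lnp d by simp
      have E: "real n * integral\<^sup>L kj.T kj.h \<le> real n * \<delta>\<^sup>2 / 2"
      proof -
        have "real n * integral\<^sup>L kj.T kj.h \<le> real n * (\<delta>\<^sup>2 / 2)"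
          using kj.expectation_bound by (intro mult_left_mono) auto
        then show ?thesis by simp
      qed
      have sub: "B j \<subseteq> {\<omega> \<in> space (kj.Om n). (\<Sum>i<n. kj.h (\<omega> i)) \<ge> real n * integral\<^sup>L kj.T kj.h + \<epsilon>}"
      proof
        fix \<omega> assume "\<omega> \<in> B j"
        then have w: "\<omega> \<in> space \<Omega>" "thr < KL j \<omega>" unfolding B_def by auto
        have "KL j \<omega> = (\<Sum>i<n. kj.h (\<omega> i))" unfolding KL_def by (rule kj.KL_eq)
        moreover have "thr = real n * \<delta>\<^sup>2 / 2 + \<epsilon>" unfolding thr_def \<epsilon>_def pp_def ..
        ultimately show "\<omega> \<in> {\<omega> \<in> space (kj.Om n). (\<Sum>i<n. kj.h (\<omega> i)) \<ge> real n * integral\<^sup>L kj.T kj.h + \<epsilon>}"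
          using w E Om by auto
      qed
      have "O.prob (B j) \<le> measure (kj.Om n) {\<omega> \<in> space (kj.Om n). (\<Sum>i<n. kj.h (\<omega> i)) \<ge> real n * integral\<^sup>L kj.T kj.h + \<epsilon>}"
      proof -
        have m: "{\<omega> \<in> space (kj.Om n). (\<Sum>i<n. kj.h (\<omega> i)) \<ge> real n * integral\<^sup>L kj.T kj.h + \<epsilon>} \<in> sets (kj.Om n)"
          using kj.h_comp_meas by measurable
        show ?thesis using O.finite_measure_mono[OF sub] m Om by simp
      qed
      also have "\<dots> \<le> exp (-2 * \<epsilon>\<^sup>2 / (real n * (2 * \<delta>)\<^sup>2))"
        by (rule kj.tail[OF d n eps])
      also have "-2 * \<epsilon>\<^sup>2 / (real n * (2 * \<delta>)\<^sup>2) = -2 * ln pp"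
      proof -
        have "\<epsilon>\<^sup>2 = 4 * (real n * ln pp) * \<delta>\<^sup>2"
          unfolding \<epsilon>_def using lnp by (simp add: power_mult_distrib)
        then show ?thesis using n d by (simp add: field_simps power2_eq_square)
      qed
      also have "exp (-2 * ln pp) = 1 / pp\<^sup>2"
      proof -
        have e1: "exp (real 2 * ln pp) = exp (ln pp) ^ 2" by (rule exp_of_nat_mult)
        have e2: "exp (ln pp) = pp" using pp1 by simp
        have "-2 * ln pp = - (real 2 * ln pp)" by simp
        then have "exp (-2 * ln pp) = inverse (exp (real 2 * ln pp))" by (simp only: exp_minus)
        then show ?thesis using e1 e2 by (simp add: inverse_eq_divide)
      qed
      finally show ?thesis .
    qed
    have compl: "space \<Omega> - {\<omega> \<in> space \<Omega>. Max (range (\<lambda>j. KL j \<omega>)) \<le> thr} = (\<Union>j. B j)"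
      unfolding B_def by (auto simp: Max_le_iff)
    have "O.prob (space \<Omega> - {\<omega> \<in> space \<Omega>. Max (range (\<lambda>j. KL j \<omega>)) \<le> thr}) \<le> (\<Sum>j\<in>UNIV. O.prob (B j))"
      unfolding compl using Bev by (intro O.finite_measure_subadditive_finite) auto
    also have "\<dots> \<le> (\<Sum>j\<in>(UNIV::'p set). 1 / pp\<^sup>2)" by (intro sum_mono Bj)
    also have "\<dots> = 1 / pp" unfolding pp_def by (simp add: power2_eq_square)
    finally have "O.prob (space \<Omega> - {\<omega> \<in> space \<Omega>. Max (range (\<lambda>j. KL j \<omega>)) \<le> thr}) \<le> 1 / pp" .
    then show ?thesis using O.prob_compl[OF Sev] by simp
  qed
  then show ?thesis unfolding \<Omega>_def thr_def KL_def pp_def .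
qed


end
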